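(* The families $\mathrm{SLT}_1$ and $\mathrm{RL}_1^V$ are incomparable; in particular $\{a\}\in\mathrm{RL}_1^V\setminus\mathrm{SLT}_1$ and $\{a\}\{b\}^*\{a\}\cup\{a\}\in\mathrm{SLT}_1\setminus\mathrm{RL}_1^V$.
   Context: Strictly locally testable languages: let $V$ be an alphabet and $k\ge1$. For $B,I,E\subseteq V^k$ and $F\subseteq V^{\le k-1}$, $\mathrm{slt}(B,I,E,F)$ is the language over $V$ consisting of all words in $F$ together with all words $a_1\cdots a_n$ ($a_i\in V$, $n\ge k$) with $a_1\cdots a_k\in B$, $a_{j+1}\cdots a_{j+k}\in I$ for all $1\le j\le n-k-1$, and $a_{n-k+1}\cdots a_n\in E$. $\mathrm{SLT}_k$ is the family of languages of this form. A right-linear grammar is $G=(N,T,P,S)$ with rules $A\to wB$ or $A\to w$ ($A,B\in N$, $w\in T^*$). For a regular language $L$, $\mathrm{Var}_{RL}(L)$ is the minimum of $|N|$ over all right-linear grammars generating $L$; $\mathrm{RL}_n^V=\{L\text{ regular}:\mathrm{Var}_{RL}(L)\le n\}$. *)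

theory Defs
  imports Main
begin

definition words_len :: "'a set \<Rightarrow> nat \<Rightarrow> 'a list set" where
  "words_len V k = {w. length w = k \<and> set w \<subseteq> V}"

definition words_le :: "'a set \<Rightarrow> nat \<Rightarrow> 'a list set" where
  "words_le V k = {w. length w \<le> k \<and> set w \<subseteq> V}"

text \<open>slt(B,I,E,F) for window length k.  The interior factor
  a_{j+1}...a_{j+k} (1 <= j <= n-k-1) is take k (drop j w).\<close>
definition slt :: "nat \<Rightarrow> 'a list set \<Rightarrow> 'a list set \<Rightarrow> 'a list set \<Rightarrow> 'a list set \<Rightarrow> 'a list set" where
  "slt k B I E F = F \<union> {w. length w \<ge> k \<and> take k w \<in> B
      \<and> (\<forall>j. 1 \<le> j \<and> j + k + 1 \<le> length w \<longrightarrow> take k (drop j w) \<in> I)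
      \<and> drop (length w - k) w \<in> E}"

definition SLT :: "'a set \<Rightarrow> nat \<Rightarrow> 'a list set set" where
  "SLT V k = {L. \<exists>B I E F. B \<subseteq> words_len V k \<and> I \<subseteq> words_len V k \<and> E \<subseteq> words_len V k
      \<and> F \<subseteq> words_le V (k - 1) \<and> L = slt k B I E F}"

text \<open>Right-linear grammars: nonterminals are natural numbers; a rule (A, w, Some B)
  stands for A -> w B and (A, w, None) for A -> w.\<close>
type_synonym 'a rl_rule = "nat \<times> 'a list \<times> nat option"

inductive rl_derives :: "'a rl_rule set \<Rightarrow> nat \<Rightarrow> 'a list \<Rightarrow> bool" for P where
  term_rule: "(A, u, None) \<in> P \<Longrightarrow> rl_derives P A u"
| cont_rule: "(A, u, Some B) \<in> P \<Longrightarrow> rl_derives P B v \<Longrightarrow> rl_derives P A (u @ v)"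

definition rl_grammar :: "nat set \<Rightarrow> 'a set \<Rightarrow> 'a rl_rule set \<Rightarrow> nat \<Rightarrow> bool" where
  "rl_grammar N T P S \<longleftrightarrow> finite N \<and> finite P \<and> S \<in> N \<and>
     (\<forall>(A, w, X) \<in> P. A \<in> N \<and> set w \<subseteq> T \<and> (\<forall>B. X = Some B \<longrightarrow> B \<in> N))"

definition rl_lang :: "'a rl_rule set \<Rightarrow> nat \<Rightarrow> 'a list set" where
  "rl_lang P S = {w. rl_derives P S w}"

definition Var_RL :: "'a set \<Rightarrow> 'a list set \<Rightarrow> nat" where
  "Var_RL V L = (LEAST n. \<exists>N P S. rl_grammar N V P S \<and> card N = n \<and> rl_lang P S = L)"

definition regular :: "'a set \<Rightarrow> 'a list set \<Rightarrow> bool" where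
  "regular V L \<longleftrightarrow> L \<subseteq> lists V \<and> (\<exists>(Q :: nat set) q0 (\<delta> :: nat \<Rightarrow> 'a \<Rightarrow> nat) Fin.
     finite Q \<and> q0 \<in> Q \<and> Fin \<subseteq> Q \<and> (\<forall>q\<in>Q. \<forall>x\<in>V. \<delta> q x \<in> Q) \<and>
     L = {w. w \<in> lists V \<and> foldl \<delta> q0 w \<in> Fin})"

definition RL :: "'a set \<Rightarrow> nat \<Rightarrow> 'a list set set" where
  "RL V n = {L. regular V L \<and> Var_RL V L \<le> n}"

end

theory Submission
  imports Defs
begin

lemma take1_drop: "i < length xs \<Longrightarrow> take 1 (drop i xs) = [xs!i]"
  by (metis Cons_nth_drop_Suc One_nat_def take0 take_Suc_Cons)

lemma rl_single:
  assumes "rl_derives P A w" "\<forall>(A',u,X)\<in>P. A' = S \<and> (\<forall>B. X = Some B \<longrightarrow> B = S)"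
  shows "\<exists>us v. (S,v,None)\<in>P \<and> (\<forall>u\<in>set us. (S,u,Some S)\<in>P) \<and> w = concat us @ v"
  using assms
proof (induction rule: rl_derives.induct)
  case (term_rule A u)
  then have "A = S" by fastforce
  then show ?case using term_rule by (intro exI[of _ "[]"] exI[of _ u]) auto
next
  case (cont_rule A u B v)
  then obtain us v' where h: "(S,v',None)\<in>P" "\<forall>u\<in>set us. (S,u,Some S)\<in>P" "v = concat us @ v'"
    by blast
  from cont_rule have "A = S" "B = S" by fastforce+
  then show ?case using h cont_rule by (intro exI[of _ "u#us"] exI[of _ v']) auto
qed

lemma L2_no_triple:
  assumes "a \<noteq> b" "u \<noteq> []"
    "u@u@u@v \<in> {[a] @ w @ [a] | w. set w \<subseteq> {b}} \<union> {[a]}"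
  shows False
proof -
  obtain x u' where u: "u = x # u'" using assms(2) by (cases u) auto
  have "u@u@u@v \<noteq> [a]" using u by auto
  then obtain w where w: "u@u@u@v = [a] @ w @ [a]" "set w \<subseteq> {b}" using assms(3) by auto
  have xa: "x = a" using w u by simp
  have "filter ((=) a) w = []" using w(2) assms(1) by (auto simp: filter_empty_conv)
  hence "length (filter ((=) a) (u@u@u@v)) = 2" using w(1) by simp
  moreover have "length (filter ((=) a) (u@u@u@v)) \<ge> 3" using u xa by simp
  ultimately show False by simp
qed

lemma card_le1_single: "finite N \<Longrightarrow> S \<in> N \<Longrightarrow> card N \<le> 1 \<Longrightarrow> N = {S}"
  using card_le_Suc0_iff_eq[of N] by auto

lemma not_one:
  assumes ab: "a \<noteq> b" and g: "rl_grammar N V P S" and c: "card N \<le> 1"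
    and l: "rl_lang P S = {[a] @ w @ [a] | w. set w \<subseteq> {b}} \<union> {[a]}"
  shows False
proof -
  have gg: "finite N \<and> finite P \<and> S \<in> N \<and>
    (\<forall>(A, w, X) \<in> P. A \<in> N \<and> set w \<subseteq> V \<and> (\<forall>B. X = Some B \<longrightarrow> B \<in> N))"
    using g unfolding rl_grammar_def .
  have g': "finite N" "finite P" "S \<in> N"
    "\<forall>(A, w, X) \<in> P. A \<in> N \<and> set w \<subseteq> V \<and> (\<forall>B. X = Some B \<longrightarrow> B \<in> N)"
    by (rule conjunct1[OF gg], rule conjunct1[OF conjunct2[OF gg]],
        rule conjunct1[OF conjunct2[OF conjunct2[OF gg]]], rule conjunct2[OF conjunct2[OF conjunct2[OF gg]]])
  have N: "N = {S}" by (rule card_le1_single[OF g'(1) g'(3) c])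
  have rules: "\<forall>(A',u,X)\<in>P. A' = S \<and> (\<forall>B. X = Some B \<longrightarrow> B = S)"
  proof (intro ballI)
    fix r assume "r \<in> P"
    then show "case r of (A',u,X) \<Rightarrow> A' = S \<and> (\<forall>B. X = Some B \<longrightarrow> B = S)"
      using g'(4) N by (cases r) fastforce
  qed
  define T where "T = {v. (S,v,None)\<in>P}"
  have "T \<subseteq> (\<lambda>(_,v,_). v) ` P" unfolding T_def by force
  hence fT: "finite T" using g'(2) finite_subset by blast
  define f where "f = (\<lambda>n. [a] @ replicate n b @ [a])"
  have "inj f" unfolding f_def by (rule injI) simp
  hence inf: "infinite (range f)" using finite_imageD by blast
  have "\<not> range f \<subseteq> T" using inf fT finite_subset by blast
  then obtain n where n: "f n \<notin> T" by blast
  have "f n \<in> rl_lang P S" unfolding l f_def by auto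
  hence "rl_derives P S (f n)" unfolding rl_lang_def by simp
  then obtain us v where h: "(S,v,None)\<in>P" "\<forall>u\<in>set us. (S,u,Some S)\<in>P" "f n = concat us @ v"
    using rl_single[OF _ rules] by blast
  have "concat us \<noteq> []"
  proof
    assume "concat us = []"
    hence "f n = v" using h(3) by simp
    thus False using n h(1) unfolding T_def by simp
  qed
  then obtain u where u: "u \<in> set us" "u \<noteq> []" by auto
  have uP: "(S,u,Some S)\<in>P" using h(2) u(1) by blast
  have "rl_derives P S v" using h(1) by (rule rl_derives.term_rule)
  hence "rl_derives P S (u@v)" using uP rl_derives.cont_rule by blast
  hence "rl_derives P S (u@u@v)" using uP rl_derives.cont_rule by fastforce
  hence "rl_derives P S (u@u@u@v)" using uP rl_derives.cont_rule by fastforce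
  hence "u@u@u@v \<in> {[a] @ w @ [a] | w. set w \<subseteq> {b}} \<union> {[a]}"
    using l unfolding rl_lang_def by blast
  thus False using L2_no_triple[OF ab u(2)] by blast
qed

lemma regularI:
  "L \<subseteq> lists V \<Longrightarrow> finite (Q::nat set) \<Longrightarrow> q0\<in>Q \<Longrightarrow> Fin \<subseteq> Q \<Longrightarrow> \<forall>q\<in>Q. \<forall>x\<in>V. \<delta> q x \<in> Q
   \<Longrightarrow> L = {w. w \<in> lists V \<and> foldl \<delta> q0 w \<in> Fin} \<Longrightarrow> regular V L"
  unfolding regular_def by blast

lemma regA:
  assumes "a \<in> V"
  shows "regular V {[a]}"
proof -
  define \<delta> where "\<delta> = (\<lambda>(q::nat) x. if q = 0 \<and> x = a then (1::nat) else 2)"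
  have d2: "foldl \<delta> 2 w = 2" for w by (induction w) (auto simp: \<delta>_def)
  have eq: "{[a]} = {w. w \<in> lists V \<and> foldl \<delta> 0 w \<in> {1}}"
  proof (intro set_eqI iffI)
    fix w assume "w \<in> {w. w \<in> lists V \<and> foldl \<delta> 0 w \<in> {1}}"
    then show "w \<in> {[a]}"
    proof (cases w)
      case Nil then show ?thesis using \<open>w \<in> _\<close> by simp
    next
      case (Cons x w')
      then show ?thesis using \<open>w \<in> _\<close> d2
        by (cases w') (auto simp: \<delta>_def split: if_splits)
    qed
  qed (use assms in \<open>auto simp: \<delta>_def\<close>)
  have cl: "\<forall>q\<in>{0,1,2}. \<forall>x\<in>V. \<delta> q x \<in> {0,1,2}" by (simp add: \<delta>_def)
  have sub: "{[a]} \<subseteq> lists V" using assms by simp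
  show ?thesis
    by (rule regularI[OF sub _ _ _ cl eq]) simp_all
qed

lemma setb: "set w \<subseteq> {b} \<longleftrightarrow> w = replicate (length w) b"
  by (induction w) auto

lemma L2_alt: "{[a] @ w @ [a] | w. set w \<subseteq> {b}} \<union> {[a]} = {[a]} \<union> range (\<lambda>n. [a] @ replicate n b @ [a])"
proof (intro set_eqI iffI)
  fix x assume "x \<in> {[a] @ w @ [a] | w. set w \<subseteq> {b}} \<union> {[a]}"
  then consider "x = [a]" | w where "x = [a] @ w @ [a]" "set w \<subseteq> {b}" by blast
  then show "x \<in> {[a]} \<union> range (\<lambda>n. [a] @ replicate n b @ [a])"
  proof cases
    case 1 then show ?thesis by simp
  next
    case 2
    hence "x = [a] @ replicate (length w) b @ [a]" using setb[of w b] by simp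
    then show ?thesis by blast
  qed
next
  fix x assume "x \<in> {[a]} \<union> range (\<lambda>n. [a] @ replicate n b @ [a])"
  then consider "x = [a]" | n where "x = [a] @ replicate n b @ [a]" by blast
  then show "x \<in> {[a] @ w @ [a] | w. set w \<subseteq> {b}} \<union> {[a]}"
  proof cases
    case 1 then show ?thesis by simp
  next
    case 2
    have "set (replicate n b) \<subseteq> {b}" by (induction n) auto
    then show ?thesis using 2 by blast
  qed
qed

lemma regB:
  assumes "a \<in> V" "b \<in> V" "a \<noteq> b"
  shows "regular V ({[a] @ w @ [a] | w. set w \<subseteq> {b}} \<union> {[a]})"
proof -
  define \<delta> where "\<delta> = (\<lambda>(q::nat) x. if q = 0 then (if x = a then 1 else 3)
      else if q = 1 \<or> q = 4 then (if x = a then 2 else if x = b then 4 else 3) else (3::nat))"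
  have d3: "foldl \<delta> 3 w = 3" for w by (induction w) (auto simp: \<delta>_def)
  have d2: "foldl \<delta> 2 w \<in> {1,2} \<longleftrightarrow> w = []" for w
    using d3 by (cases w) (auto simp: \<delta>_def)
  have d14: "q = 1 \<or> q = 4 \<Longrightarrow> foldl \<delta> q w \<in> {1,2} \<longleftrightarrow> (q = 1 \<and> w = []) \<or> (\<exists>n. w = replicate n b @ [a])" for q w
  proof (induction w arbitrary: q)
    case Nil then show ?case by auto
  next
    case (Cons x w)
    have fl: "foldl \<delta> q (x#w) = foldl \<delta> (\<delta> q x) w" by simp
    show ?case
    proof (cases "x = a")
      case True
      have r: "(\<exists>n. x # w = replicate n b @ [a]) \<longleftrightarrow> w = []"
        using True assms(3) by (auto, case_tac n, auto)
      have "\<delta> q x = 2" using True Cons.prems by (auto simp: \<delta>_def)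
      then show ?thesis using fl r d2 by simp
    next
      case False
      show ?thesis
      proof (cases "x = b")
        case True
        have r: "(\<exists>n. x # w = replicate n b @ [a]) \<longleftrightarrow> (\<exists>n. w = replicate n b @ [a])"
        proof
          assume "\<exists>n. x # w = replicate n b @ [a]"
          then obtain n where "x # w = replicate n b @ [a]" by blast
          then show "\<exists>n. w = replicate n b @ [a]" using False by (cases n) auto
        next
          assume "\<exists>n. w = replicate n b @ [a]"
          then obtain n where "w = replicate n b @ [a]" by blast
          then show "\<exists>n. x # w = replicate n b @ [a]" using True by (intro exI[of _ "Suc n"]) simp
        qed
        have "\<delta> q x = 4" using True False Cons.prems by (auto simp: \<delta>_def)
        then show ?thesis using fl r Cons.IH[of 4] by simp
      next
        case False2: False
        have r: "\<not> (\<exists>n. x # w = replicate n b @ [a])"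
        proof
          assume "\<exists>n. x # w = replicate n b @ [a]"
          then obtain n where "x # w = replicate n b @ [a]" by blast
          then show False using False False2 by (cases n) auto
        qed
        have "\<delta> q x = 3" using False False2 Cons.prems by (auto simp: \<delta>_def)
        then show ?thesis using fl r d3 by simp
      qed
    qed
  qed
  have eq: "{[a]} \<union> range (\<lambda>n. [a] @ replicate n b @ [a]) = {w. w \<in> lists V \<and> foldl \<delta> 0 w \<in> {1,2}}"
  proof (intro set_eqI iffI)
    fix w assume w: "w \<in> {w. w \<in> lists V \<and> foldl \<delta> 0 w \<in> {1,2}}"
    then show "w \<in> {[a]} \<union> range (\<lambda>n. [a] @ replicate n b @ [a])"
    proof (cases w)
      case Nil then show ?thesis using w by simp
    next
      case (Cons x w')
      have fl: "foldl \<delta> 0 w = foldl \<delta> (\<delta> 0 x) w'" using Cons by simp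
      have xa: "x = a"
      proof (rule ccontr)
        assume "x \<noteq> a"
        hence "\<delta> 0 x = 3" by (simp add: \<delta>_def)
        thus False using fl d3 w by simp
      qed
      hence "\<delta> 0 x = 1" by (simp add: \<delta>_def)
      hence "w' = [] \<or> (\<exists>n. w' = replicate n b @ [a])" using fl w d14[of 1 w'] by simp
      then show ?thesis using Cons xa by auto
    qed
  next
    fix w assume w: "w \<in> {[a]} \<union> range (\<lambda>n. [a] @ replicate n b @ [a])"
    then obtain w' where w': "w = a # w'" "w' = [] \<or> (\<exists>n. w' = replicate n b @ [a])" by auto
    have "w \<in> lists V" using w assms by auto
    moreover have "\<delta> 0 a = 1" by (simp add: \<delta>_def)
    hence "foldl \<delta> 0 w \<in> {1,2}"
      using w' d14[of 1 w'] by simp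
    ultimately show "w \<in> {w. w \<in> lists V \<and> foldl \<delta> 0 w \<in> {1,2}}" by simp
  qed
  have cl: "\<forall>q\<in>{0,1,2,3,4}. \<forall>x\<in>V. \<delta> q x \<in> {0,1,2,3,4}" by (simp add: \<delta>_def)
  have sub: "{[a]} \<union> range (\<lambda>n. [a] @ replicate n b @ [a]) \<subseteq> lists V" using assms by auto
  show ?thesis unfolding L2_alt
    by (rule regularI[OF sub _ _ _ cl eq]) simp_all
qed


lemma gramA:
  assumes "a \<in> V"
  shows "Var_RL V {[a]} \<le> 1"
proof -
  have "rl_derives {(0::nat,[a],None)} 0 w \<longleftrightarrow> w = [a]" for w
    by (auto elim: rl_derives.cases intro: rl_derives.term_rule)
  hence "rl_grammar {0} V {(0::nat,[a],None)} 0 \<and> card {0::nat} = 1 \<and> rl_lang {(0::nat,[a],None)} 0 = {[a]}"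
    using assms unfolding rl_grammar_def rl_lang_def by auto
  thus ?thesis unfolding Var_RL_def by (intro Least_le) blast
qed

lemma gramB:
  assumes "a \<in> V" "b \<in> V"
  shows "\<exists>N P S. rl_grammar N V P S \<and> card N = 2 \<and>
     rl_lang P S = {[a] @ w @ [a] | w. set w \<subseteq> {b}} \<union> {[a]}"
proof -
  define P :: "'a rl_rule set" where "P = {(0::nat,[a],None), (0,[a],Some 1), (1,[b],Some 1), (1,[a],None)}"
  have fw: "rl_derives P A w \<Longrightarrow> (A = 1 \<longrightarrow> (\<exists>n. w = replicate n b @ [a])) \<and>
      (A = 0 \<longrightarrow> w = [a] \<or> (\<exists>n. w = [a] @ replicate n b @ [a]))" for A w
  proof (induction rule: rl_derives.induct)
    case (term_rule A u)
    then show ?case unfolding P_def by (auto intro: exI[of _ 0])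
  next
    case (cont_rule A u B v)
    have c: "(A = 0 \<and> u = [a] \<or> A = 1 \<and> u = [b]) \<and> B = 1"
      using cont_rule.hyps(1) unfolding P_def by auto
    then obtain n where n: "v = replicate n b @ [a]" using cont_rule.IH by blast
    show ?case
    proof (cases "A = 0")
      case True
      then have "u = [a]" using c by simp
      then show ?thesis using n True by auto
    next
      case False
      then have "A = 1" "u = [b]" using c by auto
      then have "u @ v = replicate (Suc n) b @ [a]" using n by simp
      then show ?thesis using \<open>A = 1\<close> by (simp del: replicate_Suc)
    qed
  qed
  have bw: "rl_derives P 1 (replicate n b @ [a])" for n
  proof (induction n)
    case 0 then show ?case unfolding P_def by (auto intro: rl_derives.term_rule)
  next
    case (Suc n)
    have "(1,[b],Some 1) \<in> P" unfolding P_def by simp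
    from rl_derives.cont_rule[OF this Suc] show ?case by simp
  qed
  have "rl_lang P 0 = {[a]} \<union> range (\<lambda>n. [a] @ replicate n b @ [a])"
  proof (intro set_eqI iffI)
    fix w assume "w \<in> rl_lang P 0" then show "w \<in> {[a]} \<union> range (\<lambda>n. [a] @ replicate n b @ [a])"
      using fw[of 0 w] unfolding rl_lang_def by auto
  next
    fix w assume "w \<in> {[a]} \<union> range (\<lambda>n. [a] @ replicate n b @ [a])"
    moreover have "(0,[a],None) \<in> P" "(0,[a],Some 1) \<in> P" unfolding P_def by auto
    ultimately show "w \<in> rl_lang P 0" unfolding rl_lang_def
      using bw rl_derives.term_rule rl_derives.cont_rule by fastforce
  qed
  moreover have "rl_grammar {0,1} V P 0" using assms unfolding rl_grammar_def P_def by auto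
  ultimately show ?thesis unfolding L2_alt by (intro exI[of _ "{0,1::nat}"] exI[of _ P] exI[of _ "0::nat"]) auto
qed

lemma notRL_B:
  assumes "a \<in> V" "b \<in> V" "a \<noteq> b"
  shows "\<not> Var_RL V ({[a] @ w @ [a] | w. set w \<subseteq> {b}} \<union> {[a]}) \<le> 1"
proof
  let ?L = "{[a] @ w @ [a] | w. set w \<subseteq> {b}} \<union> {[a]}"
  assume le: "Var_RL V ?L \<le> 1"
  have ex: "\<exists>n N P S. rl_grammar N V P S \<and> card N = n \<and> rl_lang P S = ?L"
    using gramB[OF assms(1,2)] by blast
  have "\<exists>N P S. rl_grammar N V P S \<and> card N = Var_RL V ?L \<and> rl_lang P S = ?L"
    unfolding Var_RL_def by (rule LeastI_ex) (use ex in blast)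
  then obtain N P S where "rl_grammar N V P S" "card N \<le> 1" "rl_lang P S = ?L"
    using le by auto
  thus False using not_one[OF assms(3)] by blast
qed

lemma notSLT_A: "{[a]} \<notin> SLT V 1"
proof
  assume "{[a]} \<in> SLT V 1"
  then obtain B I E F where F: "F \<subseteq> words_le V 0" and L: "{[a]} = slt 1 B I E F"
    unfolding SLT_def by auto
  have nF: "[a] \<notin> F" using F unfolding words_le_def by auto
  have "[a] \<in> slt 1 B I E F" by (subst L[symmetric]) simp
  hence "[a] \<in> {w. length w \<ge> 1 \<and> take 1 w \<in> B
      \<and> (\<forall>j. 1 \<le> j \<and> j + 1 + 1 \<le> length w \<longrightarrow> take 1 (drop j w) \<in> I)
      \<and> drop (length w - 1) w \<in> E}" using nF unfolding slt_def by blast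
  hence BE: "[a] \<in> B" "[a] \<in> E" by simp_all
  have "[a,a] \<in> {w. length w \<ge> 1 \<and> take 1 w \<in> B
      \<and> (\<forall>j. 1 \<le> j \<and> j + 1 + 1 \<le> length w \<longrightarrow> take 1 (drop j w) \<in> I)
      \<and> drop (length w - 1) w \<in> E}" using BE by simp
  hence "[a,a] \<in> slt 1 B I E F" unfolding slt_def by blast
  thus False using L by (metis list.inject list.distinct(1) singletonD)
qed

lemma SLT_B:
  assumes "a \<in> V" "b \<in> V"
  shows "{[a] @ w @ [a] | w. set w \<subseteq> {b}} \<union> {[a]} \<in> SLT V 1"
proof -
  have "{[a] @ w @ [a] | w. set w \<subseteq> {b}} \<union> {[a]} = slt 1 {[a]} {[b]} {[a]} {}"
  proof (intro set_eqI iffI)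
    fix w assume "w \<in> {[a] @ w @ [a] | w. set w \<subseteq> {b}} \<union> {[a]}"
    then show "w \<in> slt 1 {[a]} {[b]} {[a]} {}"
    proof
      assume "w \<in> {[a]}" then show ?thesis unfolding slt_def by auto
    next
      assume "w \<in> {[a] @ w @ [a] | w. set w \<subseteq> {b}}"
      then obtain m where w: "w = a # m @ [a]" "set m \<subseteq> {b}" by auto
      have "take 1 (drop j w) = [b]" if jj: "1 \<le> j" "j + 1 + 1 \<le> length w" for j
      proof -
        obtain i where j: "j = Suc i" using jj(1) by (cases j) auto
        have "i < length m" using jj w j by simp
        hence "take 1 (drop j w) = [m!i]" using w j take1_drop[of i "m @ [a]"] by (simp add: nth_append)
        thus ?thesis using \<open>i < length m\<close> w(2) nth_mem by fastforce
      qed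
      thus ?thesis using w unfolding slt_def by auto
    qed
  next
    fix w assume "w \<in> slt 1 {[a]} {[b]} {[a]} {}"
    hence h: "length w \<ge> 1" "take 1 w = [a]"
      "\<forall>j. 1 \<le> j \<and> j + 2 \<le> length w \<longrightarrow> take 1 (drop j w) = [b]"
      "drop (length w - 1) w = [a]" unfolding slt_def by auto
    show "w \<in> {[a] @ w @ [a] | w. set w \<subseteq> {b}} \<union> {[a]}"
    proof (cases "length w = 1")
      case True then show ?thesis using h(2) by (cases w) auto
    next
      case False
      then obtain x m y where w: "w = x # m @ [y]" using h(1)
        by (metis One_nat_def Suc_le_length_iff le_numeral_extra(4) length_Cons list.size(3) rev_exhaust)
      have xy: "x = a" "y = a" using h(2,4) w by auto
      have "set m \<subseteq> {b}"
      proof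
        fix z assume "z \<in> set m"
        then obtain i where i: "i < length m" "z = m!i" by (metis in_set_conv_nth)
        have "take 1 (drop (Suc i) w) = [m!i]" using w i take1_drop[of i "m @ [y]"] by (simp add: nth_append)
        moreover have "take 1 (drop (Suc i) w) = [b]"
          using h(3)[rule_format, of "Suc i"] w i by simp
        ultimately show "z \<in> {b}" using i by simp
      qed
      then show ?thesis using w xy by auto
    qed
  qed
  moreover have "{[a]} \<subseteq> words_len V 1" "{[b]} \<subseteq> words_len V 1"
    using assms unfolding words_len_def by auto
  ultimately show ?thesis unfolding SLT_def by blast
qed

theorem mainTheorem12:
  fixes V :: "'a set" and a b :: 'a
  assumes "finite V" and "a \<in> V" and "b \<in> V" and "a \<noteq> b"
  shows "\<not> SLT V 1 \<subseteq> RL V 1 \<and> \<not> RL V 1 \<subseteq> SLT V 1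
     \<and> {[a]} \<in> RL V 1 - SLT V 1
     \<and> {[a] @ w @ [a] | w. set w \<subseteq> {b}} \<union> {[a]} \<in> SLT V 1 - RL V 1"
proof -
  have A: "{[a]} \<in> RL V 1 - SLT V 1"
    using regA[OF assms(2)] gramA[OF assms(2)] notSLT_A[of a V] unfolding RL_def by simp
  have B: "{[a] @ w @ [a] | w. set w \<subseteq> {b}} \<union> {[a]} \<in> SLT V 1 - RL V 1"
    using SLT_B[OF assms(2,3)] notRL_B[OF assms(2-4)] unfolding RL_def by simp
  show ?thesis using A B by blast
qed

end
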